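(* Let $({\mathbf\Lambda}^\star,{\mathbf V}^\star)$, with ${\mathbf\Lambda}^\star,{\mathbf V}^\star\ge 0$ entrywise, be a minimizer of $F$ over the set of pairs of entrywise nonnegative $(2L+1)\times K$ matrices. Then the entropic-regularized fair problem $$\min_{\pi}\Big\{\mathcal R_\beta(\pi)\;:\;\pi \text{ supported on the grid},\ \mathcal U_s(\pi,\ell)\le \epsilon_s \ \text{for all } \ell\in[\![L]\!],\,s\in[K]\Big\}$$ admits the solution $\pi_{{\mathbf\Lambda}^\star,{\mathbf V}^\star}$.
   Context: Let $K\ge 2$, $d\ge1$, and let $(X,S,Y)$ be a random triple with values in $\mathbb R^d\times[K]\times\mathbb R$, $\mathbb E[Y^2]<\infty$. Put $\eta(x)=\mathbb E[Y\mid X=x]$, $p_s=\mathbb P(S=s)>0$ for all $s\in[K]$, $\tau_s(x)=\mathbb P(S=s\mid X=x)$, $t_s(x)=1-\tau_s(x)/p_s$ and $\mathbf t(x)=(t_s(x))_{s\in[K]}$. Fix $B>0$, $L\in\mathbb N$, $\beta>0$ and $\boldsymbol\epsilon=(\epsilon_s)_{s\in[K]}\in[0,1]^K$. Write $[\![L]\!]=\{-L,\dots,L\}$ and $r_\ell(x)=(\eta(x)-\ell B/L)^2$. A randomized prediction $\pi$ is a Markov kernel from $\mathbb R^d$ to $\mathbb R$; it is supported on the grid if each $\pi(\cdot\mid x)$ is concentrated on $\{\ell B/L:\ell\in[\![L]\!]\}$, and then $\pi(\ell\mid x)$ denotes the mass at $\ell B/L$. Risk: $\mathcal R(\pi)=\mathbb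 E\big[\int(\hat y-\eta(X))^2\pi(d\hat y\mid X)\big]$. Negative entropy of a discrete distribution $\mu$: $\Psi(\mu)=\sum_{y}\mu(y)\log\mu(y)$ (with $0\log0=0$), and $\mathcal R_\beta(\pi)=\mathcal R(\pi)+\beta^{-1}\mathbb E[\Psi(\pi(\cdot\mid X))]$. Unfairness: $\mathcal U_s(\pi,\ell)=\big|\mathbb E[\pi(\ell\mid X)\mid S=s]-\mathbb E[\pi(\ell\mid X)]\big|$. For $\mathbf w\in\mathbb R^m$: $\mathrm{LSE}_\beta(\mathbf w)=\beta^{-1}\log\sum_{j}e^{\beta w_j}$ and softmax $\sigma_j(\mathbf w)=e^{w_j}/\sum_i e^{w_i}$. For matrices ${\mathbf\Lambda}=(\lambda_{\ell s}),{\mathbf V}=(\nu_{\ell s})$ indexed by $\ell\in[\![L]\!],s\in[K]$, let $\boldsymbol\lambda_\ell=(\lambda_{\ell s})_s$, $\boldsymbol\nu_\ell=(\nu_{\ell s})_s$, $$F({\mathbf\Lambda},{\mathbf V})=\mathbb E\Big[\mathrm{LSE}_\beta\Big(\big(\langle\boldsymbol\lambda_\ell-\boldsymbol\nu_\ell,\mathbf t(X)\rangle-r_\ell(X)\big)_{\ell\in[\![L]\!]}\Big)\Big]+\sum_{\ell\in[\![L]\!]}\langle\boldsymbol\lambda_\ell+\boldsymbol\nu_\ell,\boldsymbol\epsilon\rangle,$$ and $\pi_{{\mathbf\Lambda},{\mathbf V}}(\ell\mid x)=\sigma_\ell\Big(\beta\big(\langle\boldsymbol\lambda_{\ell'}-\boldsymbol\nu_{\ell'},\mathbf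 t(x)\rangle-r_{\ell'}(x)\big)_{\ell'\in[\![L]\!]}\Big)$ (a prediction supported on the grid). *)

theory Defs
  imports "HOL-Probability.Probability"
begin

text \<open>Index conventions: the grid index is l in {-L..L} (type int), sensitive
attribute values s in {1..K} (type nat). Features take values in real^'d.\<close>

definition grid_idx :: "nat \<Rightarrow> int set" where
  "grid_idx L = {- int L .. int L}"

definition grid_pt :: "real \<Rightarrow> nat \<Rightarrow> int \<Rightarrow> real" where
  "grid_pt B L l = real_of_int l * B / real L"

definition is_cond_exp_fun ::
  "'a measure \<Rightarrow> ('a \<Rightarrow> 'x::topological_space) \<Rightarrow> ('a \<Rightarrow> real) \<Rightarrow> ('x \<Rightarrow> real) \<Rightarrow> bool" where
  "is_cond_exp_fun M X Y g \<longleftrightarrow>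
     g \<in> borel_measurable borel \<and> integrable M (\<lambda>\<omega>. g (X \<omega>)) \<and>
     (\<forall>A \<in> sets borel. (\<integral>\<omega>. indicator A (X \<omega>) * Y \<omega> \<partial>M) =
                         (\<integral>\<omega>. indicator A (X \<omega>) * g (X \<omega>) \<partial>M))"

definition pS :: "'a measure \<Rightarrow> ('a \<Rightarrow> nat) \<Rightarrow> nat \<Rightarrow> real" where
  "pS M S s = measure M {\<omega> \<in> space M. S \<omega> = s}"

definition tfun :: "'a measure \<Rightarrow> ('a \<Rightarrow> nat) \<Rightarrow> (nat \<Rightarrow> 'x \<Rightarrow> real) \<Rightarrow> nat \<Rightarrow> 'x \<Rightarrow> real" where
  "tfun M S \<tau> s x = 1 - \<tau> s x / pS M S s"

definition rfun :: "('x \<Rightarrow> real) \<Rightarrow> real \<Rightarrow> nat \<Rightarrow> int \<Rightarrow> 'x \<Rightarrow> real" where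
  "rfun \<eta> B L l x = (\<eta> x - grid_pt B L l)\<^sup>2"

text \<open>Randomized prediction supported on the grid: pi x l is the mass at l*B/L.\<close>
definition grid_prediction :: "nat \<Rightarrow> ('x::topological_space \<Rightarrow> int \<Rightarrow> real) \<Rightarrow> bool" where
  "grid_prediction L \<pi> \<longleftrightarrow>
     (\<forall>x l. 0 \<le> \<pi> x l) \<and> (\<forall>x l. l \<notin> grid_idx L \<longrightarrow> \<pi> x l = 0) \<and>
     (\<forall>x. (\<Sum>l\<in>grid_idx L. \<pi> x l) = 1) \<and>
     (\<forall>l. (\<lambda>x. \<pi> x l) \<in> borel_measurable borel)"

definition risk ::
  "'a measure \<Rightarrow> ('a \<Rightarrow> 'x) \<Rightarrow> ('x \<Rightarrow> real) \<Rightarrow> real \<Rightarrow> nat \<Rightarrow> ('x \<Rightarrow> int \<Rightarrow> real) \<Rightarrow> real" where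
  "risk M X \<eta> B L \<pi> = (\<integral>\<omega>. (\<Sum>l\<in>grid_idx L. \<pi> (X \<omega>) l * rfun \<eta> B L l (X \<omega>)) \<partial>M)"

definition negent :: "nat \<Rightarrow> (int \<Rightarrow> real) \<Rightarrow> real" where
  "negent L \<mu> = (\<Sum>l\<in>grid_idx L. if \<mu> l = 0 then 0 else \<mu> l * ln (\<mu> l))"

definition risk_beta ::
  "'a measure \<Rightarrow> ('a \<Rightarrow> 'x) \<Rightarrow> ('x \<Rightarrow> real) \<Rightarrow> real \<Rightarrow> nat \<Rightarrow> real \<Rightarrow> ('x \<Rightarrow> int \<Rightarrow> real) \<Rightarrow> real" where
  "risk_beta M X \<eta> B L \<beta> \<pi> =
     risk M X \<eta> B L \<pi> + (1 / \<beta>) * (\<integral>\<omega>. negent L (\<pi> (X \<omega>)) \<partial>M)"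

definition unfair ::
  "'a measure \<Rightarrow> ('a \<Rightarrow> 'x) \<Rightarrow> ('a \<Rightarrow> nat) \<Rightarrow> ('x \<Rightarrow> int \<Rightarrow> real) \<Rightarrow> int \<Rightarrow> nat \<Rightarrow> real" where
  "unfair M X S \<pi> l s =
     \<bar>(\<integral>\<omega>. \<pi> (X \<omega>) l * indicator {\<omega>. S \<omega> = s} \<omega> \<partial>M) / pS M S s - (\<integral>\<omega>. \<pi> (X \<omega>) l \<partial>M)\<bar>"

definition LSE :: "real \<Rightarrow> 'i set \<Rightarrow> ('i \<Rightarrow> real) \<Rightarrow> real" where
  "LSE \<beta> I w = (1 / \<beta>) * ln (\<Sum>j\<in>I. exp (\<beta> * w j))"

definition score ::
  "'a measure \<Rightarrow> ('a \<Rightarrow> nat) \<Rightarrow> (nat \<Rightarrow> 'x \<Rightarrow> real) \<Rightarrow> ('x \<Rightarrow> real) \<Rightarrow> real \<Rightarrow> nat \<Rightarrow> nat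
    \<Rightarrow> (int \<Rightarrow> nat \<Rightarrow> real) \<Rightarrow> (int \<Rightarrow> nat \<Rightarrow> real) \<Rightarrow> int \<Rightarrow> 'x \<Rightarrow> real" where
  "score M S \<tau> \<eta> B L K \<Lambda> V l x =
     (\<Sum>s\<in>{1..K}. (\<Lambda> l s - V l s) * tfun M S \<tau> s x) - rfun \<eta> B L l x"

definition Fobj ::
  "'a measure \<Rightarrow> ('a \<Rightarrow> 'x) \<Rightarrow> ('a \<Rightarrow> nat) \<Rightarrow> (nat \<Rightarrow> 'x \<Rightarrow> real) \<Rightarrow> ('x \<Rightarrow> real) \<Rightarrow> real \<Rightarrow> nat
    \<Rightarrow> nat \<Rightarrow> real \<Rightarrow> (nat \<Rightarrow> real) \<Rightarrow> (int \<Rightarrow> nat \<Rightarrow> real) \<Rightarrow> (int \<Rightarrow> nat \<Rightarrow> real) \<Rightarrow> real" where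
  "Fobj M X S \<tau> \<eta> B L K \<beta> \<epsilon> \<Lambda> V =
     (\<integral>\<omega>. LSE \<beta> (grid_idx L) (\<lambda>l. score M S \<tau> \<eta> B L K \<Lambda> V l (X \<omega>)) \<partial>M) +
     (\<Sum>l\<in>grid_idx L. \<Sum>s\<in>{1..K}. (\<Lambda> l s + V l s) * \<epsilon> s)"

definition pi_LV ::
  "'a measure \<Rightarrow> ('a \<Rightarrow> nat) \<Rightarrow> (nat \<Rightarrow> 'x \<Rightarrow> real) \<Rightarrow> ('x \<Rightarrow> real) \<Rightarrow> real \<Rightarrow> nat \<Rightarrow> nat
    \<Rightarrow> real \<Rightarrow> (int \<Rightarrow> nat \<Rightarrow> real) \<Rightarrow> (int \<Rightarrow> nat \<Rightarrow> real) \<Rightarrow> 'x \<Rightarrow> int \<Rightarrow> real" where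
  "pi_LV M S \<tau> \<eta> B L K \<beta> \<Lambda> V x l =
     (if l \<in> grid_idx L then
        exp (\<beta> * score M S \<tau> \<eta> B L K \<Lambda> V l x) /
        (\<Sum>l'\<in>grid_idx L. exp (\<beta> * score M S \<tau> \<eta> B L K \<Lambda> V l' x))
      else 0)"

definition nonneg_mat :: "nat \<Rightarrow> nat \<Rightarrow> (int \<Rightarrow> nat \<Rightarrow> real) \<Rightarrow> bool" where
  "nonneg_mat L K \<Lambda> \<longleftrightarrow> (\<forall>l\<in>grid_idx L. \<forall>s\<in>{1..K}. 0 \<le> \<Lambda> l s)"

definition fair_feasible ::
  "'a measure \<Rightarrow> ('a \<Rightarrow> 'x::topological_space) \<Rightarrow> ('a \<Rightarrow> nat) \<Rightarrow> nat \<Rightarrow> nat \<Rightarrow> (nat \<Rightarrow> real)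
    \<Rightarrow> ('x \<Rightarrow> int \<Rightarrow> real) \<Rightarrow> bool" where
  "fair_feasible M X S L K \<epsilon> \<pi> \<longleftrightarrow>
     grid_prediction L \<pi> \<and> (\<forall>l\<in>grid_idx L. \<forall>s\<in>{1..K}. unfair M X S \<pi> l s \<le> \<epsilon> s)"

end

theory Submission
  imports Defs
begin


lemma exp_quad_le:
  fixes x :: real assumes "\<bar>x\<bar> \<le> 1" shows "exp x \<le> 1 + x + x\<^sup>2"
proof (cases "x \<ge> 0")
  case True then show ?thesis using exp_bound[of x] assms by auto
next
  case False
  define y where "y = -x"
  have y: "0 \<le> y" "y \<le> 1" using False assms y_def by auto
  have e: "1 + y + y\<^sup>2 / 2 \<le> exp y" using exp_lower_Taylor_quadratic[OF y(1)] .
  have pos: "0 < 1 + y + y\<^sup>2 / 2" using y by (simp add: add_pos_nonneg)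
  have id: "(1 - y + y * y) * (1 + y + y * y / 2) = 1 + (y * y + y * y * y + y * y * y * y) / 2"
    by (simp add: field_simps)
  have "y * y * y \<ge> 0" "y * y * y * y \<ge> 0" "y * y \<ge> 0" using y by auto
  then have "(y * y + y * y * y + y * y * y * y) / 2 \<ge> 0" by simp
  then have ge1: "(1 - y + y * y) * (1 + y + y * y / 2) \<ge> 1" unfolding id by linarith
  have nn: "1 - y + y * y \<ge> 0" using y by (smt (verit) mult_nonneg_nonneg)
  have "(1 - y + y * y) * (1 + y + y * y / 2) \<le> (1 - y + y * y) * exp y"
    using e nn by (intro mult_left_mono) (auto simp: power2_eq_square)
  then have "1 \<le> (1 - y + y\<^sup>2) * exp y" using ge1 by (simp add: power2_eq_square)
  then have "exp (-y) \<le> 1 - y + y\<^sup>2"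
    by (simp add: exp_minus field_simps)
  then show ?thesis using y_def by (simp add: power2_eq_square)
qed

lemma quad_nonneg:
  fixes a D \<delta> :: real
  assumes "\<delta> > 0" "D \<ge> 0" "\<forall>h. 0 < h \<and> h \<le> \<delta> \<longrightarrow> 0 \<le> h * a + h\<^sup>2 * D"
  shows "a \<ge> 0"
proof (rule ccontr)
  assume "\<not> a \<ge> 0"
  then have a: "a < 0" by simp
  define h where "h = min \<delta> (-a / (D + 1))"
  have "a / (D + 1) < 0" using a assms(2) by (intro divide_neg_pos) auto
  then have h: "0 < h" "h \<le> \<delta>" "h \<le> -a / (D+1)" using a assms unfolding h_def by auto
  have "h * D \<le> (-a / (D+1)) * D" by (rule mult_right_mono) (use h assms in auto)
  also have "\<dots> = -a - (-a) / (D + 1)" using assms(2) by (simp add: field_simps)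
  also have "\<dots> < -a" using a assms(2) by (simp add: divide_neg_pos)
  finally have "a + h * D < 0" by simp
  then have "h * (a + h * D) < 0" using h by (simp add: mult_pos_neg)
  moreover have "0 \<le> h * a + h\<^sup>2 * D" using assms(3) h by blast
  ultimately show False by (simp add: power2_eq_square algebra_simps)
qed

lemma quad_nonpos:
  fixes a D \<delta> :: real
  assumes "\<delta> > 0" "D \<ge> 0" "\<forall>h. -\<delta> \<le> h \<and> h < 0 \<longrightarrow> 0 \<le> h * a + h\<^sup>2 * D"
  shows "a \<le> 0"
proof -
  have "\<forall>h. 0 < h \<and> h \<le> \<delta> \<longrightarrow> 0 \<le> h * (-a) + h\<^sup>2 * D"
  proof (intro allI impI)
    fix h :: real assume "0 < h \<and> h \<le> \<delta>"
    then have "0 \<le> (-h) * a + (-h)\<^sup>2 * D" using assms(3)[rule_format, of "-h"] by auto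
    then show "0 \<le> h * (-a) + h\<^sup>2 * D" by simp
  qed
  from quad_nonneg[OF assms(1,2) this] show ?thesis by simp
qed

lemma kkt_real:
  fixes a D \<delta> m :: real
  assumes "\<delta> > 0" "D \<ge> 0" "m \<ge> 0"
    and H: "\<forall>h. \<bar>h\<bar> \<le> \<delta> \<and> -m \<le> h \<longrightarrow> 0 \<le> h * a + h\<^sup>2 * D"
  shows "a \<ge> 0 \<and> m * a = 0"
proof -
  have a0: "a \<ge> 0"
    by (rule quad_nonneg[OF assms(1,2)]) (use H assms(3) in auto)
  have "a \<le> 0" if mp: "m > 0"
  proof (rule quad_nonpos[of "min \<delta> m"])
    show "min \<delta> m > 0" using mp assms(1) by simp
    show "D \<ge> 0" by fact
    show "\<forall>h. - min \<delta> m \<le> h \<and> h < 0 \<longrightarrow> 0 \<le> h * a + h\<^sup>2 * D"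
    proof (intro allI impI)
      fix h assume "- min \<delta> m \<le> h \<and> h < 0"
      then have "\<bar>h\<bar> \<le> \<delta> \<and> -m \<le> h" by auto
      then show "0 \<le> h * a + h\<^sup>2 * D" using H by blast
    qed
  qed
  then show ?thesis using a0 assms(3) by (cases "m > 0") auto
qed

lemma LSE_pert:
  fixes w :: "int \<Rightarrow> real"
  assumes G: "finite G" "l0 \<in> G" and b: "\<beta> > 0" and a: "\<bar>\<beta> * a\<bar> \<le> 1"
  shows "LSE \<beta> G (\<lambda>l. w l + (if l = l0 then a else 0)) \<le>
         LSE \<beta> G w + exp (\<beta> * w l0) / (\<Sum>l\<in>G. exp (\<beta> * w l)) * a + \<beta> * a\<^sup>2"
proof -
  define Z where "Z = (\<Sum>l\<in>G. exp (\<beta> * w l))"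
  define e0 where "e0 = exp (\<beta> * w l0)"
  define E where "E = exp (\<beta> * a)"
  define \<sigma> where "\<sigma> = e0 / Z"
  have Zpos: "Z > 0" unfolding Z_def using G by (intro sum_pos) auto
  have e0Z: "e0 \<le> Z" unfolding Z_def e0_def
    using G by (intro member_le_sum) auto
  have s0: "0 < \<sigma>" "\<sigma> \<le> 1" unfolding \<sigma>_def e0_def using Zpos e0Z e0_def by auto
  have "(\<Sum>l\<in>G. exp (\<beta> * (w l + (if l = l0 then a else 0))))
      = (\<Sum>l\<in>G. exp (\<beta> * w l) + (if l = l0 then e0 * (E - 1) else 0))"
    by (intro sum.cong refl) (auto simp: e0_def E_def distrib_left exp_add algebra_simps)
  also have "\<dots> = Z + e0 * (E - 1)" using G by (simp add: sum.distrib Z_def)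
  also have "\<dots> = Z * (1 + \<sigma> * (E - 1))" using Zpos by (simp add: \<sigma>_def field_simps)
  finally have sumeq: "(\<Sum>l\<in>G. exp (\<beta> * (w l + (if l = l0 then a else 0)))) = Z * (1 + \<sigma> * (E - 1))" .
  have Epos: "E > 0" unfolding E_def by simp
  have pos1: "1 + \<sigma> * (E - 1) > 0"
  proof -
    have "1 + \<sigma> * (E - 1) = (1 - \<sigma>) + \<sigma> * E" by (simp add: algebra_simps)
    moreover have "\<sigma> * E > 0" using s0 Epos by simp
    ultimately show ?thesis using s0 by linarith
  qed
  have lnle: "ln (1 + \<sigma> * (E - 1)) \<le> \<sigma> * (E - 1)"
    using ln_le_minus_one[OF pos1] by simp
  have Ele: "E - 1 \<le> \<beta> * a + (\<beta> * a)\<^sup>2" unfolding E_def using exp_quad_le[OF a] by simp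
  have "LSE \<beta> G (\<lambda>l. w l + (if l = l0 then a else 0)) = (1/\<beta>) * (ln Z + ln (1 + \<sigma> * (E - 1)))"
    unfolding LSE_def sumeq using Zpos pos1 by (simp add: ln_mult)
  also have "\<dots> \<le> (1/\<beta>) * (ln Z + \<sigma> * (\<beta> * a + (\<beta> * a)\<^sup>2))"
    using lnle Ele s0 b by (intro mult_left_mono) (auto intro!: mult_left_mono order.trans[OF lnle])
  also have "\<dots> = LSE \<beta> G w + \<sigma> * a + \<sigma> * (\<beta> * a\<^sup>2)"
    unfolding LSE_def Z_def using b by (simp add: field_simps power2_eq_square)
  also have "\<dots> \<le> LSE \<beta> G w + \<sigma> * a + \<beta> * a\<^sup>2"
    using s0 b by (simp add: mult_left_le_one_le)
  finally show ?thesis unfolding \<sigma>_def e0_def Z_def .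
qed

lemma LSE_abs_bound:
  fixes w :: "int \<Rightarrow> real"
  assumes G: "finite G" "G \<noteq> {}" and b: "\<beta> > 0"
  shows "\<bar>LSE \<beta> G w\<bar> \<le> (\<Sum>l\<in>G. \<bar>w l\<bar>) + \<bar>ln (real (card G))\<bar> / \<beta>"
proof -
  define Mx where "Mx = (\<Sum>l\<in>G. \<bar>w l\<bar>)"
  have wl: "\<bar>w l\<bar> \<le> Mx" if "l \<in> G" for l
    unfolding Mx_def using G that by (intro member_le_sum) auto
  define Z where "Z = (\<Sum>l\<in>G. exp (\<beta> * w l))"
  obtain l0 where l0: "l0 \<in> G" using G by auto
  have "exp (\<beta> * w l0) \<le> Z" unfolding Z_def using G l0 by (intro member_le_sum) auto
  moreover have "exp (- (\<beta> * Mx)) \<le> exp (\<beta> * w l0)"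
  proof -
    have "\<beta> * (- w l0) \<le> \<beta> * Mx" using wl[OF l0] b by (intro mult_left_mono) auto
    then show ?thesis by simp
  qed
  ultimately have Zlo: "exp (- (\<beta> * Mx)) \<le> Z" by linarith
  have "Z \<le> (\<Sum>l\<in>G. exp (\<beta> * Mx))" unfolding Z_def
    using wl b by (intro sum_mono) (auto simp: abs_le_iff mult_left_mono)
  also have "\<dots> = real (card G) * exp (\<beta> * Mx)" by simp
  finally have Zhi: "Z \<le> real (card G) * exp (\<beta> * Mx)" .
  have Zpos: "Z > 0" using Zlo by (smt (verit) exp_gt_zero)
  have cpos: "real (card G) \<ge> 1" using G by (simp add: Suc_leI card_gt_0_iff)
  have lnlo: "- (\<beta> * Mx) \<le> ln Z" using Zlo Zpos by (metis exp_gt_zero ln_exp ln_le_cancel_iff)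
  have "ln Z \<le> ln (real (card G) * exp (\<beta> * Mx))" using Zhi Zpos by simp
  also have "\<dots> = ln (real (card G)) + \<beta> * Mx" using cpos by (simp add: ln_mult)
  finally have lnhi: "ln Z \<le> ln (real (card G)) + \<beta> * Mx" .
  have lc: "ln (real (card G)) \<ge> 0" using cpos by simp
  have "LSE \<beta> G w = ln Z / \<beta>" unfolding LSE_def Z_def by simp
  moreover have "ln Z / \<beta> \<le> Mx + ln (real (card G)) / \<beta>"
    using lnhi b by (simp add: field_simps)
  moreover have "- Mx \<le> ln Z / \<beta>" using lnlo b by (simp add: field_simps)
  moreover have "0 \<le> ln (real (card G)) / \<beta>" using lc b by simp
  ultimately show ?thesis unfolding Mx_def using lc by (simp add: abs_le_iff)
qed

lemma LSE_integrable:
  fixes w :: "int \<Rightarrow> 'a \<Rightarrow> real"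
  assumes P: "prob_space M" and G: "finite G" "G \<noteq> {}" and b: "\<beta> > 0"
    and wi: "\<And>l. integrable M (w l)"
  shows "integrable M (\<lambda>\<omega>. LSE \<beta> G (\<lambda>l. w l \<omega>))"
proof -
  interpret prob_space M by fact
  have [measurable]: "w l \<in> borel_measurable M" for l using wi by auto
  show ?thesis
  proof (rule Bochner_Integration.integrable_bound)
    show "integrable M (\<lambda>\<omega>. (\<Sum>l\<in>G. \<bar>w l \<omega>\<bar>) + \<bar>ln (real (card G))\<bar> / \<beta>)"
      using wi by (intro Bochner_Integration.integrable_add integrable_sum integrable_abs) auto
    show "(\<lambda>\<omega>. LSE \<beta> G (\<lambda>l. w l \<omega>)) \<in> borel_measurable M"
      unfolding LSE_def by measurable
    show "AE \<omega> in M. norm (LSE \<beta> G (\<lambda>l. w l \<omega>)) \<le> norm ((\<Sum>l\<in>G. \<bar>w l \<omega>\<bar>) + \<bar>ln (real (card G))\<bar> / \<beta>)"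
      using LSE_abs_bound[OF G b] by (auto intro!: AE_I2 order.trans[OF _ abs_ge_self])
  qed
qed

lemma bounded_integrable:
  assumes "prob_space M" "u \<in> borel_measurable M" "AE \<omega> in M. \<bar>u \<omega>\<bar> \<le> C"
  shows "integrable M (u :: 'a \<Rightarrow> real)"
proof -
  interpret prob_space M by fact
  show ?thesis
    by (rule Bochner_Integration.integrable_bound[where f="\<lambda>_. C"]) (use assms in auto)
qed

lemma pert_integral:
  fixes w :: "int \<Rightarrow> 'a \<Rightarrow> real"
  assumes P: "prob_space M" and G: "finite G" "l0 \<in> G" and b: "\<beta> > 0" and C: "C \<ge> 0"
    and wi: "\<And>l. integrable M (w l)" and um: "u \<in> borel_measurable M"
    and ub: "AE \<omega> in M. \<bar>u \<omega>\<bar> \<le> C" and h: "\<bar>h\<bar> * \<beta> * C \<le> 1"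
  shows "(\<integral>\<omega>. LSE \<beta> G (\<lambda>l. w l \<omega> + (if l = l0 then h * u \<omega> else 0)) \<partial>M) \<le>
     (\<integral>\<omega>. LSE \<beta> G (\<lambda>l. w l \<omega>) \<partial>M) +
     h * (\<integral>\<omega>. exp (\<beta> * w l0 \<omega>) / (\<Sum>l\<in>G. exp (\<beta> * w l \<omega>)) * u \<omega> \<partial>M) + \<beta> * C\<^sup>2 * h\<^sup>2"
proof -
  interpret prob_space M by fact
  have Gne: "G \<noteq> {}" using G by auto
  have [measurable]: "w l \<in> borel_measurable M" for l using wi by auto
  have [measurable]: "u \<in> borel_measurable M" by fact
  have ui: "integrable M u" by (rule bounded_integrable[OF P um ub])
  define \<sigma> where "\<sigma> \<omega> = exp (\<beta> * w l0 \<omega>) / (\<Sum>l\<in>G. exp (\<beta> * w l \<omega>))" for \<omega>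
  have spos: "0 \<le> \<sigma> \<omega>" "\<sigma> \<omega> \<le> 1" for \<omega>
  proof -
    have Zp: "(\<Sum>l\<in>G. exp (\<beta> * w l \<omega>)) > 0" using G by (intro sum_pos) auto
    have "exp (\<beta> * w l0 \<omega>) \<le> (\<Sum>l\<in>G. exp (\<beta> * w l \<omega>))" using G by (intro member_le_sum) auto
    then show "0 \<le> \<sigma> \<omega>" "\<sigma> \<omega> \<le> 1" unfolding \<sigma>_def using Zp by auto
  qed
  have [measurable]: "\<sigma> \<in> borel_measurable M" unfolding \<sigma>_def by measurable
  have sui: "integrable M (\<lambda>\<omega>. \<sigma> \<omega> * u \<omega>)"
  proof (rule bounded_integrable[OF P _ _])
    show "(\<lambda>\<omega>. \<sigma> \<omega> * u \<omega>) \<in> borel_measurable M" by measurable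
    show "AE \<omega> in M. \<bar>\<sigma> \<omega> * u \<omega>\<bar> \<le> C"
      using ub
    proof eventually_elim
      case (elim \<omega>)
      have "\<bar>\<sigma> \<omega> * u \<omega>\<bar> = \<sigma> \<omega> * \<bar>u \<omega>\<bar>" using spos by (simp add: abs_mult)
      also have "\<dots> \<le> 1 * C" using spos elim C by (intro mult_mono) auto
      finally show ?case by simp
    qed
  qed
  have wi': "integrable M (\<lambda>\<omega>. w l \<omega> + (if l = l0 then h * u \<omega> else 0))" for l
    using wi ui by (cases "l = l0") auto
  have I1: "integrable M (\<lambda>\<omega>. LSE \<beta> G (\<lambda>l. w l \<omega> + (if l = l0 then h * u \<omega> else 0)))"
    using LSE_integrable[OF P G(1) Gne b, of "\<lambda>l \<omega>. w l \<omega> + (if l = l0 then h * u \<omega> else 0)"] wi' by simp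
  have I0: "integrable M (\<lambda>\<omega>. LSE \<beta> G (\<lambda>l. w l \<omega>))"
    using LSE_integrable[OF P G(1) Gne b, of w] wi by simp
  have "(\<integral>\<omega>. LSE \<beta> G (\<lambda>l. w l \<omega> + (if l = l0 then h * u \<omega> else 0)) \<partial>M) \<le>
        (\<integral>\<omega>. LSE \<beta> G (\<lambda>l. w l \<omega>) + h * (\<sigma> \<omega> * u \<omega>) + \<beta> * C\<^sup>2 * h\<^sup>2 \<partial>M)"
  proof (rule integral_mono_AE[OF I1])
    show "integrable M (\<lambda>\<omega>. LSE \<beta> G (\<lambda>l. w l \<omega>) + h * (\<sigma> \<omega> * u \<omega>) + \<beta> * C\<^sup>2 * h\<^sup>2)"
      using I0 sui by auto
    show "AE \<omega> in M. LSE \<beta> G (\<lambda>l. w l \<omega> + (if l = l0 then h * u \<omega> else 0))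
        \<le> LSE \<beta> G (\<lambda>l. w l \<omega>) + h * (\<sigma> \<omega> * u \<omega>) + \<beta> * C\<^sup>2 * h\<^sup>2"
      using ub
    proof eventually_elim
      case (elim \<omega>)
      have ab: "\<bar>\<beta> * (h * u \<omega>)\<bar> \<le> 1"
      proof -
        have "\<bar>\<beta> * (h * u \<omega>)\<bar> = \<beta> * (\<bar>h\<bar> * \<bar>u \<omega>\<bar>)" using b by (simp add: abs_mult)
        also have "\<dots> \<le> \<beta> * (\<bar>h\<bar> * C)" using b elim by (intro mult_left_mono) auto
        finally show ?thesis using h by (simp add: ac_simps)
      qed
      have sq: "(h * u \<omega>)\<^sup>2 \<le> C\<^sup>2 * h\<^sup>2"
      proof -
        have "(h * u \<omega>)\<^sup>2 = h\<^sup>2 * \<bar>u \<omega>\<bar>\<^sup>2" by (simp add: power_mult_distrib)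
        also have "\<dots> \<le> h\<^sup>2 * C\<^sup>2" using elim by (intro mult_left_mono power_mono) auto
        finally show ?thesis by (simp add: ac_simps)
      qed
      have "LSE \<beta> G (\<lambda>l. w l \<omega> + (if l = l0 then h * u \<omega> else 0)) \<le>
            LSE \<beta> G (\<lambda>l. w l \<omega>) + \<sigma> \<omega> * (h * u \<omega>) + \<beta> * (h * u \<omega>)\<^sup>2"
        using LSE_pert[OF G b ab, of "\<lambda>l. w l \<omega>"] unfolding \<sigma>_def by simp
      also have "\<dots> \<le> LSE \<beta> G (\<lambda>l. w l \<omega>) + \<sigma> \<omega> * (h * u \<omega>) + \<beta> * (C\<^sup>2 * h\<^sup>2)"
        using sq b by (intro add_left_mono mult_left_mono) auto
      finally show ?case by (simp add: ac_simps)
    qed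
  qed
  also have "\<dots> = (\<integral>\<omega>. LSE \<beta> G (\<lambda>l. w l \<omega>) \<partial>M) + h * (\<integral>\<omega>. \<sigma> \<omega> * u \<omega> \<partial>M) + \<beta> * C\<^sup>2 * h\<^sup>2"
    using I0 sui by (simp add: prob_space)
  finally show ?thesis unfolding \<sigma>_def by simp
qed



lemma cef_setup:
  fixes X :: "'a \<Rightarrow> 'x::topological_space"
  assumes P: "prob_space M" and Xm: "X \<in> borel_measurable M"
  shows "finite_measure_subalgebra M (vimage_algebra (space M) X borel)"
proof -
  interpret prob_space M by fact
  have "subalgebra M (vimage_algebra (space M) X borel)"
    unfolding subalgebra_def using sets_image_in_sets[OF refl Xm] by simp
  then show ?thesis by unfold_locales
qed

lemma cef_ae:
  fixes X :: "'a \<Rightarrow> 'x::topological_space"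
  assumes P: "prob_space M" and Xm: "X \<in> borel_measurable M"
    and Zm: "Z \<in> borel_measurable M" and Zi: "integrable M Z" and c: "is_cond_exp_fun M X Z g"
  shows "AE \<omega> in M. real_cond_exp M (vimage_algebra (space M) X borel) Z \<omega> = g (X \<omega>)"
proof -
  define F0 where "F0 = vimage_algebra (space M) X borel"
  interpret finite_measure_subalgebra M F0 using cef_setup[OF P Xm] unfolding F0_def .
  have gm: "g \<in> borel_measurable borel" and gi: "integrable M (\<lambda>\<omega>. g (X \<omega>))"
    and gA: "\<And>A. A \<in> sets borel \<Longrightarrow> (\<integral>\<omega>. indicator A (X \<omega>) * Z \<omega> \<partial>M) = (\<integral>\<omega>. indicator A (X \<omega>) * g (X \<omega>) \<partial>M)"
    using c unfolding is_cond_exp_fun_def by auto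
  have XF: "X \<in> measurable F0 borel" unfolding F0_def by (rule measurable_vimage_algebra1) auto
  have gF: "(\<lambda>\<omega>. g (X \<omega>)) \<in> borel_measurable F0" using measurable_comp[OF XF gm] by (simp add: comp_def)
  have "AE \<omega> in M. real_cond_exp M F0 Z \<omega> = g (X \<omega>)"
  proof (rule real_cond_exp_charact[OF _ Zi gi gF])
    fix A assume "A \<in> sets F0"
    then obtain B where B: "B \<in> sets borel" "A = X -` B \<inter> space M"
      unfolding F0_def by (subst (asm) sets_vimage_algebra2) auto
    have ind: "\<And>\<omega>. \<omega> \<in> space M \<Longrightarrow> indicator A \<omega> = (indicator B (X \<omega>) :: real)"
      using B by (auto simp: indicator_def)
    have "(\<integral>\<omega>\<in>A. Z \<omega> \<partial>M) = (\<integral>\<omega>. indicator B (X \<omega>) * Z \<omega> \<partial>M)"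
      unfolding set_lebesgue_integral_def by (intro Bochner_Integration.integral_cong) (auto simp: ind)
    also have "\<dots> = (\<integral>\<omega>. indicator B (X \<omega>) * g (X \<omega>) \<partial>M)" using gA[OF B(1)] .
    also have "\<dots> = (\<integral>\<omega>\<in>A. g (X \<omega>) \<partial>M)"
      unfolding set_lebesgue_integral_def by (intro Bochner_Integration.integral_cong) (auto simp: ind)
    finally show "(\<integral>\<omega>\<in>A. Z \<omega> \<partial>M) = (\<integral>\<omega>\<in>A. g (X \<omega>) \<partial>M)" .
  qed
  then show ?thesis unfolding F0_def .
qed

lemma cef_ext:
  fixes X :: "'a \<Rightarrow> 'x::topological_space"
  assumes P: "prob_space M" and Xm: "X \<in> borel_measurable M"
    and Zm: "Z \<in> borel_measurable M" and Zi: "integrable M Z" and c: "is_cond_exp_fun M X Z g"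
    and hm: "h \<in> borel_measurable borel" and hb: "\<And>x. \<bar>h x\<bar> \<le> C"
  shows "(\<integral>\<omega>. h (X \<omega>) * Z \<omega> \<partial>M) = (\<integral>\<omega>. h (X \<omega>) * g (X \<omega>) \<partial>M)"
proof -
  define F0 where "F0 = vimage_algebra (space M) X borel"
  interpret finite_measure_subalgebra M F0 using cef_setup[OF P Xm] unfolding F0_def .
  have ae: "AE \<omega> in M. real_cond_exp M F0 Z \<omega> = g (X \<omega>)" using cef_ae[OF assms(1-5)] unfolding F0_def .
  have gm: "g \<in> borel_measurable borel" using c unfolding is_cond_exp_fun_def by auto
  have XF: "X \<in> measurable F0 borel" unfolding F0_def by (rule measurable_vimage_algebra1) auto
  have hF: "(\<lambda>\<omega>. h (X \<omega>)) \<in> borel_measurable F0" using measurable_comp[OF XF hm] by (simp add: comp_def)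
  have [measurable]: "(\<lambda>\<omega>. h (X \<omega>)) \<in> borel_measurable M" using measurable_comp[OF Xm hm] by (simp add: comp_def)
  have [measurable]: "(\<lambda>\<omega>. g (X \<omega>)) \<in> borel_measurable M" using measurable_comp[OF Xm gm] by (simp add: comp_def)
  have [measurable]: "Z \<in> borel_measurable M" by fact
  have hZ: "integrable M (\<lambda>\<omega>. h (X \<omega>) * Z \<omega>)"
  proof (rule Bochner_Integration.integrable_bound[where f="\<lambda>\<omega>. C * Z \<omega>"])
    show "integrable M (\<lambda>\<omega>. C * Z \<omega>)" using Zi by simp
    show "(\<lambda>\<omega>. h (X \<omega>) * Z \<omega>) \<in> borel_measurable M" by measurable
    have "C \<ge> 0" using hb[of undefined] by simp
    then show "AE \<omega> in M. norm (h (X \<omega>) * Z \<omega>) \<le> norm (C * Z \<omega>)"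
      using hb by (auto intro!: AE_I2 simp: abs_mult mult_right_mono)
  qed
  have "(\<integral>\<omega>. h (X \<omega>) * Z \<omega> \<partial>M) = (\<integral>\<omega>. h (X \<omega>) * real_cond_exp M F0 Z \<omega> \<partial>M)"
    using real_cond_exp_intg(2)[OF hZ hF Zm] by simp
  also have "\<dots> = (\<integral>\<omega>. h (X \<omega>) * g (X \<omega>) \<partial>M)"
    by (intro integral_cong_AE) (use ae in auto)
  finally show ?thesis .
qed

lemma cef_sq_integrable:
  fixes X :: "'a \<Rightarrow> 'x::topological_space"
  assumes P: "prob_space M" and Xm: "X \<in> borel_measurable M"
    and Zm: "Z \<in> borel_measurable M" and Zi: "integrable M Z" and c: "is_cond_exp_fun M X Z g"
    and Z2: "integrable M (\<lambda>\<omega>. (Z \<omega>)\<^sup>2)"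
  shows "integrable M (\<lambda>\<omega>. (g (X \<omega>))\<^sup>2)"
proof -
  define F0 where "F0 = vimage_algebra (space M) X borel"
  interpret finite_measure_subalgebra M F0 using cef_setup[OF P Xm] unfolding F0_def .
  have ae: "AE \<omega> in M. real_cond_exp M F0 Z \<omega> = g (X \<omega>)" using cef_ae[OF assms(1-5)] unfolding F0_def .
  have gm: "g \<in> borel_measurable borel" using c unfolding is_cond_exp_fun_def by auto
  have [measurable]: "(\<lambda>\<omega>. g (X \<omega>)) \<in> borel_measurable M" using measurable_comp[OF Xm gm] by (simp add: comp_def)
  have "integrable M (\<lambda>x. (real_cond_exp M F0 Z x)\<^sup>2)"
    using integrable_convex_cond_exp[of Z UNIV 0 0 power2, OF Zi _ _ _ convex_power2] Z2 by auto
  then show ?thesis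
    by (rule integrable_cong_AE_imp) (use ae in auto)
qed

lemma cef_ind_bounds:
  fixes X :: "'a \<Rightarrow> 'x::topological_space"
  assumes P: "prob_space M" and Xm: "X \<in> borel_measurable M"
    and Zm: "Z \<in> borel_measurable M" and Z01: "\<And>\<omega>. 0 \<le> Z \<omega> \<and> Z \<omega> \<le> 1"
    and c: "is_cond_exp_fun M X Z g"
  shows "AE \<omega> in M. 0 \<le> g (X \<omega>) \<and> g (X \<omega>) \<le> 1"
proof -
  define F0 where "F0 = vimage_algebra (space M) X borel"
  interpret finite_measure_subalgebra M F0 using cef_setup[OF P Xm] unfolding F0_def .
  have Zi: "integrable M Z"
    by (rule bounded_integrable[OF P Zm, where C=1]) (use Z01 in auto)
  have ae: "AE \<omega> in M. real_cond_exp M F0 Z \<omega> = g (X \<omega>)"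
    using cef_ae[OF P Xm Zm Zi c] unfolding F0_def .
  have "AE \<omega> in M. real_cond_exp M F0 Z \<omega> \<ge> 0"
    by (rule real_cond_exp_ge_c[OF Zi]) (use Z01 in auto)
  moreover have "AE \<omega> in M. real_cond_exp M F0 Z \<omega> \<le> 1"
    by (rule real_cond_exp_le_c[OF Zi]) (use Z01 in auto)
  ultimately show ?thesis using ae by eventually_elim auto
qed

lemma xlnx_bound:
  fixes \<mu> :: real assumes "0 \<le> \<mu>" "\<mu> \<le> 1"
  shows "\<bar>if \<mu> = 0 then 0 else \<mu> * ln \<mu>\<bar> \<le> 1"
proof (cases "\<mu> = 0")
  case False
  then have mp: "\<mu> > 0" using assms by auto
  have "ln \<mu> \<le> 0" using assms mp by simp
  then have up: "\<mu> * ln \<mu> \<le> 0" using mp by (simp add: mult_nonneg_nonpos)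
  have "ln (1/\<mu>) \<le> 1/\<mu> - 1" using mp by (intro ln_le_minus_one) auto
  then have "- ln \<mu> \<le> 1/\<mu> - 1" using mp by (simp add: ln_div)
  then have "\<mu> * (- ln \<mu>) \<le> \<mu> * (1/\<mu> - 1)" using mp by (intro mult_left_mono) auto
  then have "- (\<mu> * ln \<mu>) \<le> 1 - \<mu>" using mp by (simp add: algebra_simps)
  then show ?thesis using False up assms by auto
qed simp

lemma gibbs_ineq:
  fixes w p :: "int \<Rightarrow> real"
  assumes G: "finite G" and b: "\<beta> > 0" and p0: "\<And>l. l \<in> G \<Longrightarrow> 0 \<le> p l"
    and p1: "(\<Sum>l\<in>G. p l) = 1"
  shows "- LSE \<beta> G w \<le> (\<Sum>l\<in>G. p l * (- w l)) + (1/\<beta>) * (\<Sum>l\<in>G. if p l = 0 then 0 else p l * ln (p l))"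
proof -
  have Gne: "G \<noteq> {}" using p1 by auto
  define Z where "Z = (\<Sum>l\<in>G. exp (\<beta> * w l))"
  have Zpos: "Z > 0" unfolding Z_def using G Gne by (intro sum_pos) auto
  define \<sigma> where "\<sigma> l = exp (\<beta> * w l) / Z" for l
  have s1: "(\<Sum>l\<in>G. \<sigma> l) = 1" unfolding \<sigma>_def using Zpos by (simp add: Z_def sum_divide_distrib[symmetric])
  have spos: "\<sigma> l > 0" for l unfolding \<sigma>_def using Zpos by simp
  have lns: "ln (\<sigma> l) = \<beta> * w l - ln Z" for l unfolding \<sigma>_def using Zpos by (simp add: ln_div)
  have each: "(if p l = 0 then 0 else p l * ln (p l)) + p l * (- (\<beta> * w l)) + p l * ln Z \<ge> p l - \<sigma> l"
    if l: "l \<in> G" for l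
  proof (cases "p l = 0")
    case True then show ?thesis using spos[of l] by simp
  next
    case False
    then have pp: "p l > 0" using p0[OF l] by auto
    have "ln (\<sigma> l / p l) \<le> \<sigma> l / p l - 1" using pp spos[of l] by (intro ln_le_minus_one) auto
    then have "p l * ln (\<sigma> l / p l) \<le> p l * (\<sigma> l / p l - 1)" using pp by (intro mult_left_mono) auto
    then have "p l * (ln (\<sigma> l) - ln (p l)) \<le> \<sigma> l - p l" using pp spos[of l] by (simp add: ln_div algebra_simps)
    then show ?thesis using False unfolding lns by (simp add: algebra_simps)
  qed
  have "(\<Sum>l\<in>G. p l - \<sigma> l) \<le> (\<Sum>l\<in>G. (if p l = 0 then 0 else p l * ln (p l)) + p l * (- (\<beta> * w l)) + p l * ln Z)"
    using each by (intro sum_mono) auto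
  also have "\<dots> = (\<Sum>l\<in>G. if p l = 0 then 0 else p l * ln (p l)) + (\<Sum>l\<in>G. p l * (- (\<beta> * w l))) + (\<Sum>l\<in>G. p l * ln Z)"
    by (simp only: sum.distrib)
  also have "(\<Sum>l\<in>G. p l * (- (\<beta> * w l))) = \<beta> * (\<Sum>l\<in>G. p l * (- w l))"
    by (simp add: sum_distrib_left algebra_simps)
  also have "(\<Sum>l\<in>G. p l * ln Z) = ln Z" using p1 by (simp add: sum_distrib_right[symmetric])
  finally have "0 \<le> (\<Sum>l\<in>G. if p l = 0 then 0 else p l * ln (p l)) + \<beta> * (\<Sum>l\<in>G. p l * (- w l)) + ln Z"
    using p1 s1 by (simp add: sum_subtractf)
  then have "0 \<le> (1/\<beta>) * ((\<Sum>l\<in>G. if p l = 0 then 0 else p l * ln (p l)) + \<beta> * (\<Sum>l\<in>G. p l * (- w l)) + ln Z)"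
    using b by simp
  then show ?thesis unfolding LSE_def Z_def using b by (simp add: algebra_simps)
qed

lemma gibbs_eq:
  fixes w :: "int \<Rightarrow> real"
  assumes G: "finite G" "G \<noteq> {}" and b: "\<beta> > 0"
  defines "p \<equiv> \<lambda>l. exp (\<beta> * w l) / (\<Sum>l'\<in>G. exp (\<beta> * w l'))"
  shows "- LSE \<beta> G w = (\<Sum>l\<in>G. p l * (- w l)) + (1/\<beta>) * (\<Sum>l\<in>G. if p l = 0 then 0 else p l * ln (p l))"
proof -
  define Z where "Z = (\<Sum>l\<in>G. exp (\<beta> * w l))"
  have Zpos: "Z > 0" unfolding Z_def using G by (intro sum_pos) auto
  have pZ: "p l = exp (\<beta> * w l) / Z" for l unfolding p_def Z_def by simp
  have p1: "(\<Sum>l\<in>G. p l) = 1" unfolding pZ using Zpos by (simp add: Z_def sum_divide_distrib[symmetric])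
  have ppos: "p l > 0" for l unfolding pZ using Zpos by simp
  have lnp: "ln (p l) = \<beta> * w l - ln Z" for l unfolding pZ using Zpos by (simp add: ln_div)
  have e1: "(\<Sum>l\<in>G. if p l = 0 then 0 else p l * ln (p l)) = (\<Sum>l\<in>G. p l * (\<beta> * w l) - p l * ln Z)"
    using ppos by (intro sum.cong refl) (simp add: lnp algebra_simps less_irrefl)
  have e2: "(\<Sum>l\<in>G. p l * (\<beta> * w l) - p l * ln Z) = \<beta> * (\<Sum>l\<in>G. p l * w l) - ln Z"
  proof -
    have "(\<Sum>l\<in>G. p l * ln Z) = ln Z" using p1 by (simp add: sum_distrib_right[symmetric])
    moreover have "(\<Sum>l\<in>G. p l * (\<beta> * w l)) = \<beta> * (\<Sum>l\<in>G. p l * w l)"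
      by (simp add: sum_distrib_left algebra_simps)
    ultimately show ?thesis by (simp add: sum_subtractf)
  qed
  have "(\<Sum>l\<in>G. p l * (- w l)) + (1/\<beta>) * (\<Sum>l\<in>G. if p l = 0 then 0 else p l * ln (p l))
      = (\<Sum>l\<in>G. p l * (- w l)) + (1/\<beta>) * (\<beta> * (\<Sum>l\<in>G. p l * w l) - ln Z)"
    unfolding e1 e2 ..
  also have "\<dots> = - ln Z / \<beta>" using b by (simp add: sum_negf field_simps sum_distrib_left)
  also have "\<dots> = - LSE \<beta> G w" unfolding LSE_def Z_def by simp
  finally show ?thesis by simp
qed



theorem lemma3p1:
  fixes M :: "'a measure" and X :: "'a \<Rightarrow> real ^ 'd" and S :: "'a \<Rightarrow> nat" and Y :: "'a \<Rightarrow> real"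
    and \<eta> :: "real ^ 'd \<Rightarrow> real" and \<tau> :: "nat \<Rightarrow> real ^ 'd \<Rightarrow> real"
    and K L :: nat and B \<beta> :: real and \<epsilon> :: "nat \<Rightarrow> real"
    and \<Lambda>s Vs :: "int \<Rightarrow> nat \<Rightarrow> real"
  assumes "prob_space M"
    and "K \<ge> 2" and "L \<ge> 1" and "B > 0" and "\<beta> > 0"
    and "\<forall>s\<in>{1..K}. 0 \<le> \<epsilon> s \<and> \<epsilon> s \<le> 1"
    and "X \<in> borel_measurable M" and "S \<in> measurable M (count_space UNIV)"
    and "\<forall>\<omega>\<in>space M. S \<omega> \<in> {1..K}"
    and "Y \<in> borel_measurable M" and "integrable M (\<lambda>\<omega>. (Y \<omega>)\<^sup>2)"
    and "\<forall>s\<in>{1..K}. pS M S s > 0"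
    and "is_cond_exp_fun M X Y \<eta>"
    and "\<forall>s\<in>{1..K}. is_cond_exp_fun M X (\<lambda>\<omega>. indicator {\<omega>. S \<omega> = s} \<omega>) (\<tau> s)"
    and "nonneg_mat L K \<Lambda>s" and "nonneg_mat L K Vs"
    and "\<forall>\<Lambda> V. nonneg_mat L K \<Lambda> \<and> nonneg_mat L K V \<longrightarrow>
           Fobj M X S \<tau> \<eta> B L K \<beta> \<epsilon> \<Lambda>s Vs \<le> Fobj M X S \<tau> \<eta> B L K \<beta> \<epsilon> \<Lambda> V"
  shows "fair_feasible M X S L K \<epsilon> (pi_LV M S \<tau> \<eta> B L K \<beta> \<Lambda>s Vs) \<and>
         (\<forall>\<pi>. fair_feasible M X S L K \<epsilon> \<pi> \<longrightarrow>
            risk_beta M X \<eta> B L \<beta> (pi_LV M S \<tau> \<eta> B L K \<beta> \<Lambda>s Vs) \<le> risk_beta M X \<eta> B L \<beta> \<pi>)"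
proof -
  note P = assms(1)
  interpret prob_space M by fact
  have b: "\<beta> > 0" by fact
  have Xm [measurable]: "X \<in> borel_measurable M" by fact
  have Sm [measurable]: "S \<in> measurable M (count_space UNIV)" by fact
  have Ym [measurable]: "Y \<in> borel_measurable M" by fact
  define G where "G = grid_idx L"
  have Gfin: "finite G" unfolding G_def grid_idx_def by simp
  have G0: "0 \<in> G" unfolding G_def grid_idx_def by simp
  have Gne: "G \<noteq> {}" using G0 by auto
  define p where "p s = pS M S s" for s
  have ppos: "s \<in> {1..K} \<Longrightarrow> p s > 0" for s using assms(12) unfolding p_def by auto
  define T where "T s \<omega> = tfun M S \<tau> s (X \<omega>)" for s \<omega>
  define R where "R l \<omega> = rfun \<eta> B L l (X \<omega>)" for l \<omega>
  define C where "C s = 1 + 1 / p s" for s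
  have etam [measurable]: "\<eta> \<in> borel_measurable borel"
    and etai: "integrable M (\<lambda>\<omega>. \<eta> (X \<omega>))" using assms(13) unfolding is_cond_exp_fun_def by auto
  have taum: "s \<in> {1..K} \<Longrightarrow> \<tau> s \<in> borel_measurable borel"
    and taui: "s \<in> {1..K} \<Longrightarrow> integrable M (\<lambda>\<omega>. \<tau> s (X \<omega>))" for s
    using assms(14) unfolding is_cond_exp_fun_def by auto
  have Yi: "integrable M Y"
  proof (rule Bochner_Integration.integrable_bound[where f="\<lambda>\<omega>. 1 + (Y \<omega>)\<^sup>2"])
    show "integrable M (\<lambda>\<omega>. 1 + (Y \<omega>)\<^sup>2)" using assms(11) by simp
    show "Y \<in> borel_measurable M" by simp
    have "\<bar>y\<bar> \<le> 1 + y\<^sup>2" for y :: real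
    proof -
      have "0 \<le> (\<bar>y\<bar> - 1)\<^sup>2" by simp
      then have "2 * \<bar>y\<bar> \<le> y\<^sup>2 + 1" by (simp add: power2_diff power2_abs)
      moreover have "0 \<le> y\<^sup>2" by simp
      ultimately show ?thesis by linarith
    qed
    then show "AE \<omega> in M. norm (Y \<omega>) \<le> norm (1 + (Y \<omega>)\<^sup>2)" by auto
  qed
  have eta2: "integrable M (\<lambda>\<omega>. (\<eta> (X \<omega>))\<^sup>2)"
    by (rule cef_sq_integrable[OF P Xm Ym Yi assms(13) assms(11)])
  have indm: "(\<lambda>\<omega>. indicator {\<omega>. S \<omega> = s} \<omega> :: real) \<in> borel_measurable M" for s
  proof -
    have "(\<lambda>\<omega>. indicator {\<omega>. S \<omega> = s} \<omega> :: real) = (\<lambda>\<omega>. if S \<omega> = s then 1 else 0)"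
      by (auto simp: indicator_def)
    also have "\<dots> \<in> borel_measurable M" by measurable
    finally show ?thesis .
  qed
  have tau01: "AE \<omega> in M. 0 \<le> \<tau> s (X \<omega>) \<and> \<tau> s (X \<omega>) \<le> 1" if "s \<in> {1..K}" for s
    by (rule cef_ind_bounds[OF P Xm indm _ ]) (use assms(14) that in \<open>auto simp: indicator_def\<close>)
  have Tm: "T s \<in> borel_measurable M" if "s \<in> {1..K}" for s
  proof -
    have "(\<lambda>\<omega>. \<tau> s (X \<omega>)) \<in> borel_measurable M" using measurable_comp[OF Xm taum[OF that]] by (simp add: comp_def)
    then show ?thesis unfolding T_def tfun_def by measurable
  qed
  have Tb: "AE \<omega> in M. \<bar>T s \<omega>\<bar> \<le> C s" if s: "s \<in> {1..K}" for s
    using tau01[OF s]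
  proof eventually_elim
    case (elim \<omega>)
    have "0 \<le> \<tau> s (X \<omega>) / p s" "\<tau> s (X \<omega>) / p s \<le> 1 / p s"
      using elim ppos[OF s] by (auto simp: divide_right_mono)
    then show ?case unfolding T_def tfun_def C_def p_def[symmetric] by auto
  qed
  have Ti: "integrable M (T s)" if "s \<in> {1..K}" for s
    by (rule bounded_integrable[OF P Tm[OF that] Tb[OF that]])
  have C0: "C s \<ge> 0" if "s \<in> {1..K}" for s unfolding C_def using ppos[OF that] by simp
  have Ri: "integrable M (R l)" for l
  proof -
    have "R l = (\<lambda>\<omega>. (\<eta> (X \<omega>))\<^sup>2 - 2 * grid_pt B L l * \<eta> (X \<omega>) + (grid_pt B L l)\<^sup>2)"
      unfolding R_def rfun_def by (auto simp: power2_diff)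
    then show ?thesis using eta2 etai by simp
  qed
  have R0: "R l \<omega> \<ge> 0" for l \<omega> unfolding R_def rfun_def by simp
  have Rm: "R l \<in> borel_measurable M" for l using Ri[of l] by auto
  have tfm: "(\<lambda>x. tfun M S \<tau> s x) \<in> borel_measurable borel" if "s \<in> {1..K}" for s
    using taum[OF that] unfolding tfun_def by measurable
  have rfm: "(\<lambda>x. rfun \<eta> B L l x) \<in> borel_measurable borel" for l unfolding rfun_def by measurable
  have scm[measurable]: "(\<lambda>x. score M S \<tau> \<eta> B L K \<Lambda> V l x) \<in> borel_measurable borel" for \<Lambda> V l
  proof -
    have "(\<lambda>x. \<Sum>s\<in>{1..K}. (\<Lambda> l s - V l s) * tfun M S \<tau> s x) \<in> borel_measurable borel"
      by (intro borel_measurable_sum borel_measurable_times borel_measurable_const tfm) auto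
    then show ?thesis unfolding score_def using rfm[of l] by (intro borel_measurable_diff) auto
  qed
  have sci: "integrable M (\<lambda>\<omega>. score M S \<tau> \<eta> B L K \<Lambda> V l (X \<omega>))" for \<Lambda> V l
  proof -
    have "(\<lambda>\<omega>. score M S \<tau> \<eta> B L K \<Lambda> V l (X \<omega>)) = (\<lambda>\<omega>. (\<Sum>s\<in>{1..K}. (\<Lambda> l s - V l s) * T s \<omega>) - R l \<omega>)"
      unfolding score_def T_def R_def by simp
    moreover have "integrable M (\<lambda>\<omega>. (\<Sum>s\<in>{1..K}. (\<Lambda> l s - V l s) * T s \<omega>) - R l \<omega>)"
      using Ti Ri by (intro Bochner_Integration.integrable_diff integrable_sum integrable_mult_right) auto
    ultimately show ?thesis by simp
  qed
  define PI where "PI = pi_LV M S \<tau> \<eta> B L K \<beta> \<Lambda>s Vs"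
  define w where "w l \<omega> = score M S \<tau> \<eta> B L K \<Lambda>s Vs l (X \<omega>)" for l \<omega>
  have wi: "integrable M (w l)" for l unfolding w_def by (rule sci)
  have PIeq: "PI (X \<omega>) l = exp (\<beta> * w l \<omega>) / (\<Sum>l'\<in>G. exp (\<beta> * w l' \<omega>))" if "l \<in> G" for l \<omega>
    using that unfolding PI_def pi_LV_def w_def G_def by simp
  have gpPI: "grid_prediction L PI"
    unfolding grid_prediction_def
  proof (intro conjI allI impI)
    fix x l
    show "0 \<le> PI x l" unfolding PI_def pi_LV_def by (auto intro!: divide_nonneg_nonneg sum_nonneg)
    show "l \<notin> grid_idx L \<Longrightarrow> PI x l = 0" unfolding PI_def pi_LV_def by simp
  next
    fix x
    have Zp: "(\<Sum>l'\<in>grid_idx L. exp (\<beta> * score M S \<tau> \<eta> B L K \<Lambda>s Vs l' x)) > 0"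
      using Gfin Gne unfolding G_def by (intro sum_pos) auto
    show "(\<Sum>l\<in>grid_idx L. PI x l) = 1" unfolding PI_def pi_LV_def
      using Zp by (simp add: sum_divide_distrib[symmetric])
  next
    fix l
    show "(\<lambda>x. PI x l) \<in> borel_measurable borel" unfolding PI_def pi_LV_def
      by (cases "l \<in> grid_idx L") (simp_all, measurable)
  qed
  have gp_facts: "(\<lambda>x. \<pi> x l) \<in> borel_measurable borel \<and> 0 \<le> \<pi> x l \<and> \<pi> x l \<le> 1"
    if gp: "grid_prediction L \<pi>" for \<pi> x l
  proof -
    have nn: "\<And>x l. 0 \<le> \<pi> x l" and out: "\<And>x l. l \<notin> G \<Longrightarrow> \<pi> x l = 0"
      and s1: "\<And>x. (\<Sum>l\<in>G. \<pi> x l) = 1" and m: "\<And>l. (\<lambda>x. \<pi> x l) \<in> borel_measurable borel"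
      using gp unfolding grid_prediction_def G_def by auto
    have "\<pi> x l \<le> 1"
    proof (cases "l \<in> G")
      case True then show ?thesis using member_le_sum[of l G "\<lambda>l. \<pi> x l"] Gfin nn s1 by auto
    qed (use out in auto)
    then show ?thesis using nn m by auto
  qed
  have Ipt_unfair: "unfair M X S \<pi> l s = \<bar>\<integral>\<omega>. \<pi> (X \<omega>) l * T s \<omega> \<partial>M\<bar>"
    if gp: "grid_prediction L \<pi>" and s: "s \<in> {1..K}" for \<pi> l s
  proof -
    have \<pi>m: "(\<lambda>x. \<pi> x l) \<in> borel_measurable borel" and \<pi>01: "\<And>x. 0 \<le> \<pi> x l \<and> \<pi> x l \<le> 1"
      using gp_facts[OF gp] by auto
    have \<pi>M[measurable]: "(\<lambda>\<omega>. \<pi> (X \<omega>) l) \<in> borel_measurable M"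
      using measurable_comp[OF Xm \<pi>m] by (simp add: comp_def)
    have tM[measurable]: "(\<lambda>\<omega>. \<tau> s (X \<omega>)) \<in> borel_measurable M"
      using measurable_comp[OF Xm taum[OF s]] by (simp add: comp_def)
    have indi: "integrable M (\<lambda>\<omega>. indicator {\<omega>. S \<omega> = s} \<omega> :: real)"
      by (rule bounded_integrable[OF P indm, where C=1]) (auto simp: indicator_def)
    have e1: "(\<integral>\<omega>. \<pi> (X \<omega>) l * indicator {\<omega>. S \<omega> = s} \<omega> \<partial>M) = (\<integral>\<omega>. \<pi> (X \<omega>) l * \<tau> s (X \<omega>) \<partial>M)"
      by (rule cef_ext[OF P Xm indm indi _ \<pi>m, where C=1]) (use assms(14) s \<pi>01 in auto)
    have \<pi>i: "integrable M (\<lambda>\<omega>. \<pi> (X \<omega>) l)"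
      by (rule bounded_integrable[OF P \<pi>M, where C=1]) (use \<pi>01 in auto)
    have \<pi>ti: "integrable M (\<lambda>\<omega>. \<pi> (X \<omega>) l * \<tau> s (X \<omega>))"
    proof (rule bounded_integrable[OF P _ _, where C=1])
      show "(\<lambda>\<omega>. \<pi> (X \<omega>) l * \<tau> s (X \<omega>)) \<in> borel_measurable M" by measurable
      show "AE \<omega> in M. \<bar>\<pi> (X \<omega>) l * \<tau> s (X \<omega>)\<bar> \<le> 1"
        using tau01[OF s]
      proof eventually_elim
        case (elim \<omega>)
        then show ?case using \<pi>01[of "X \<omega>"] by (auto simp: abs_mult intro: mult_le_one)
      qed
    qed
    have "(\<integral>\<omega>. \<pi> (X \<omega>) l * T s \<omega> \<partial>M) = (\<integral>\<omega>. \<pi> (X \<omega>) l - (\<pi> (X \<omega>) l * \<tau> s (X \<omega>)) / p s \<partial>M)"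
      unfolding T_def tfun_def p_def by (simp add: algebra_simps)
    also have "\<dots> = (\<integral>\<omega>. \<pi> (X \<omega>) l \<partial>M) - (\<integral>\<omega>. \<pi> (X \<omega>) l * \<tau> s (X \<omega>) \<partial>M) / p s"
      using \<pi>i \<pi>ti by simp
    finally have "(\<integral>\<omega>. \<pi> (X \<omega>) l * T s \<omega> \<partial>M) = (\<integral>\<omega>. \<pi> (X \<omega>) l \<partial>M) - (\<integral>\<omega>. \<pi> (X \<omega>) l * indicator {\<omega>. S \<omega> = s} \<omega> \<partial>M) / p s"
      using e1 by simp
    then show ?thesis unfolding unfair_def p_def by (simp add: abs_minus_commute)
  qed
  define pen where "pen \<Lambda> V = (\<Sum>l\<in>G. \<Sum>s\<in>{1..K}. (\<Lambda> l s + V l s) * \<epsilon> s)" for \<Lambda> V :: "int \<Rightarrow> nat \<Rightarrow> real"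
  have Feq: "Fobj M X S \<tau> \<eta> B L K \<beta> \<epsilon> \<Lambda> V = (\<integral>\<omega>. LSE \<beta> G (\<lambda>l. score M S \<tau> \<eta> B L K \<Lambda> V l (X \<omega>)) \<partial>M) + pen \<Lambda> V"
    for \<Lambda> V unfolding Fobj_def pen_def G_def ..
  define Ipt where "Ipt \<pi> l s = (\<integral>\<omega>. \<pi> (X \<omega>) l * T s \<omega> \<partial>M)" for \<pi> :: "real ^ 'd \<Rightarrow> int \<Rightarrow> real" and l s
  have min: "Fobj M X S \<tau> \<eta> B L K \<beta> \<epsilon> \<Lambda>s Vs \<le> Fobj M X S \<tau> \<eta> B L K \<beta> \<epsilon> \<Lambda> V"
    if "nonneg_mat L K \<Lambda>" "nonneg_mat L K V" for \<Lambda> V using assms(17) that by blast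
  have pertF: "0 \<le> h * (\<epsilon> s0 + (\<integral>\<omega>. PI (X \<omega>) l0 * u \<omega> \<partial>M)) + h\<^sup>2 * (\<beta> * (C s0)\<^sup>2)"
    if l0: "l0 \<in> G" and s0: "s0 \<in> {1..K}" and um: "u \<in> borel_measurable M" and ub: "AE \<omega> in M. \<bar>u \<omega>\<bar> \<le> C s0"
      and hb: "\<bar>h\<bar> * \<beta> * C s0 \<le> 1" and nn: "nonneg_mat L K \<Lambda>'" "nonneg_mat L K V'"
      and sc: "\<And>l \<omega>. score M S \<tau> \<eta> B L K \<Lambda>' V' l (X \<omega>) = w l \<omega> + (if l = l0 then h * u \<omega> else 0)"
      and pn: "pen \<Lambda>' V' = pen \<Lambda>s Vs + h * \<epsilon> s0"
    for l0 s0 u h \<Lambda>' V'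
  proof -
    have pi: "(\<integral>\<omega>. LSE \<beta> G (\<lambda>l. w l \<omega> + (if l = l0 then h * u \<omega> else 0)) \<partial>M) \<le>
     (\<integral>\<omega>. LSE \<beta> G (\<lambda>l. w l \<omega>) \<partial>M) +
     h * (\<integral>\<omega>. exp (\<beta> * w l0 \<omega>) / (\<Sum>l\<in>G. exp (\<beta> * w l \<omega>)) * u \<omega> \<partial>M) + \<beta> * (C s0)\<^sup>2 * h\<^sup>2"
      by (rule pert_integral[OF P Gfin l0 b C0[OF s0] wi um ub hb])
    have "(\<integral>\<omega>. exp (\<beta> * w l0 \<omega>) / (\<Sum>l\<in>G. exp (\<beta> * w l \<omega>)) * u \<omega> \<partial>M) = (\<integral>\<omega>. PI (X \<omega>) l0 * u \<omega> \<partial>M)"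
      using PIeq[OF l0] by simp
    note pi = pi[unfolded this]
    have "Fobj M X S \<tau> \<eta> B L K \<beta> \<epsilon> \<Lambda>s Vs \<le> Fobj M X S \<tau> \<eta> B L K \<beta> \<epsilon> \<Lambda>' V'" using min nn by blast
    also have "\<dots> = (\<integral>\<omega>. LSE \<beta> G (\<lambda>l. w l \<omega> + (if l = l0 then h * u \<omega> else 0)) \<partial>M) + pen \<Lambda>s Vs + h * \<epsilon> s0"
      unfolding Feq sc pn by simp
    finally show ?thesis using pi unfolding Feq w_def by (simp add: algebra_simps)
  qed
  have kkt: "0 \<le> \<epsilon> s0 + Ipt PI l0 s0 \<and> \<Lambda>s l0 s0 * (\<epsilon> s0 + Ipt PI l0 s0) = 0 \<and>
             0 \<le> \<epsilon> s0 - Ipt PI l0 s0 \<and> Vs l0 s0 * (\<epsilon> s0 - Ipt PI l0 s0) = 0"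
    if l0: "l0 \<in> G" and s0: "s0 \<in> {1..K}" for l0 s0
  proof -
    define \<delta> where "\<delta> = 1 / (\<beta> * C s0 + 1)"
    have bc: "\<beta> * C s0 \<ge> 0" using b C0[OF s0] by simp
    have \<delta>0: "\<delta> > 0" unfolding \<delta>_def using bc by simp
    have hb: "\<bar>h\<bar> * \<beta> * C s0 \<le> 1" if "\<bar>h\<bar> \<le> \<delta>" for h
    proof -
      have "\<bar>h\<bar> * (\<beta> * C s0) \<le> \<delta> * (\<beta> * C s0)" using that bc by (intro mult_right_mono) auto
      also have "\<dots> \<le> 1" unfolding \<delta>_def using bc by (simp add: field_simps)
      finally show ?thesis by (simp add: ac_simps)
    qed
    have D0: "\<beta> * (C s0)\<^sup>2 \<ge> 0" using b by simp
    have nnL: "\<Lambda>s l0 s0 \<ge> 0" "Vs l0 s0 \<ge> 0" using assms(15,16) l0 s0 unfolding nonneg_mat_def G_def by auto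
    have TM: "T s0 \<in> borel_measurable M" by (rule Tm[OF s0])
    have sumd: "(\<Sum>s\<in>{1..K}. (if l = l0 \<and> s = s0 then h else 0) * f s) = (if l = l0 then h * f s0 else 0)"
      for l h and f :: "nat \<Rightarrow> real"
    proof -
      have "(\<Sum>s\<in>{1..K}. (if l = l0 \<and> s = s0 then h else 0) * f s) = (\<Sum>s\<in>{1..K}. if s = s0 then (if l = l0 then h * f s else 0) else 0)"
        by (intro sum.cong) auto
      also have "\<dots> = (if l = l0 then h * f s0 else 0)" using s0 by (subst sum.delta) auto
      finally show ?thesis .
    qed
    have sumd2: "(\<Sum>l\<in>G. \<Sum>s\<in>{1..K}. (if l = l0 \<and> s = s0 then h else 0) * \<epsilon> s) = h * \<epsilon> s0" for h
      using sumd[of _ h \<epsilon>] l0 Gfin by simp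
    have A: "\<epsilon> s0 + Ipt PI l0 s0 \<ge> 0 \<and> \<Lambda>s l0 s0 * (\<epsilon> s0 + Ipt PI l0 s0) = 0"
    proof (rule kkt_real[OF \<delta>0 D0 nnL(1)], intro allI impI)
      fix h assume h: "\<bar>h\<bar> \<le> \<delta> \<and> - \<Lambda>s l0 s0 \<le> h"
      define \<Lambda>' where "\<Lambda>' = (\<lambda>l s. \<Lambda>s l s + (if l = l0 \<and> s = s0 then h else 0))"
      have nn: "nonneg_mat L K \<Lambda>'" using assms(15) h unfolding nonneg_mat_def \<Lambda>'_def by auto
      have sc: "score M S \<tau> \<eta> B L K \<Lambda>' Vs l (X \<omega>) = w l \<omega> + (if l = l0 then h * T s0 \<omega> else 0)" for l \<omega>
      proof -
        have "(\<Sum>s\<in>{1..K}. (\<Lambda>' l s - Vs l s) * tfun M S \<tau> s (X \<omega>)) =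
              (\<Sum>s\<in>{1..K}. (\<Lambda>s l s - Vs l s) * tfun M S \<tau> s (X \<omega>)) + (\<Sum>s\<in>{1..K}. (if l = l0 \<and> s = s0 then h else 0) * tfun M S \<tau> s (X \<omega>))"
          unfolding \<Lambda>'_def by (simp add: sum.distrib[symmetric] algebra_simps)
        then show ?thesis unfolding score_def w_def sumd T_def by simp
      qed
      have pn: "pen \<Lambda>' Vs = pen \<Lambda>s Vs + h * \<epsilon> s0"
      proof -
        have "pen \<Lambda>' Vs = pen \<Lambda>s Vs + (\<Sum>l\<in>G. \<Sum>s\<in>{1..K}. (if l = l0 \<and> s = s0 then h else 0) * \<epsilon> s)"
          unfolding pen_def \<Lambda>'_def by (simp add: sum.distrib[symmetric] algebra_simps)
        then show ?thesis using sumd2 by simp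
      qed
      have "0 \<le> h * (\<epsilon> s0 + (\<integral>\<omega>. PI (X \<omega>) l0 * T s0 \<omega> \<partial>M)) + h\<^sup>2 * (\<beta> * (C s0)\<^sup>2)"
        by (rule pertF[OF l0 s0 TM Tb[OF s0] hb nn assms(16) sc pn]) (use h in auto)
      then show "0 \<le> h * (\<epsilon> s0 + Ipt PI l0 s0) + h\<^sup>2 * (\<beta> * (C s0)\<^sup>2)" unfolding Ipt_def .
    qed
    have B: "\<epsilon> s0 - Ipt PI l0 s0 \<ge> 0 \<and> Vs l0 s0 * (\<epsilon> s0 - Ipt PI l0 s0) = 0"
    proof (rule kkt_real[OF \<delta>0 D0 nnL(2)], intro allI impI)
      fix h assume h: "\<bar>h\<bar> \<le> \<delta> \<and> - Vs l0 s0 \<le> h"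
      define V' where "V' = (\<lambda>l s. Vs l s + (if l = l0 \<and> s = s0 then h else 0))"
      have nn: "nonneg_mat L K V'" using assms(16) h unfolding nonneg_mat_def V'_def by auto
      have sc: "score M S \<tau> \<eta> B L K \<Lambda>s V' l (X \<omega>) = w l \<omega> + (if l = l0 then h * (- T s0 \<omega>) else 0)" for l \<omega>
      proof -
        have "(\<Sum>s\<in>{1..K}. (\<Lambda>s l s - V' l s) * tfun M S \<tau> s (X \<omega>)) =
              (\<Sum>s\<in>{1..K}. (\<Lambda>s l s - Vs l s) * tfun M S \<tau> s (X \<omega>)) - (\<Sum>s\<in>{1..K}. (if l = l0 \<and> s = s0 then h else 0) * tfun M S \<tau> s (X \<omega>))"
          unfolding V'_def by (simp add: sum_subtractf[symmetric] algebra_simps)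
        then show ?thesis unfolding score_def w_def sumd T_def by simp
      qed
      have pn: "pen \<Lambda>s V' = pen \<Lambda>s Vs + h * \<epsilon> s0"
      proof -
        have "pen \<Lambda>s V' = pen \<Lambda>s Vs + (\<Sum>l\<in>G. \<Sum>s\<in>{1..K}. (if l = l0 \<and> s = s0 then h else 0) * \<epsilon> s)"
          unfolding pen_def V'_def by (simp add: sum.distrib[symmetric] algebra_simps)
        then show ?thesis using sumd2 by simp
      qed
      have um: "(\<lambda>\<omega>. - T s0 \<omega>) \<in> borel_measurable M" using TM by simp
      have ub: "AE \<omega> in M. \<bar>- T s0 \<omega>\<bar> \<le> C s0" using Tb[OF s0] by simp
      have "0 \<le> h * (\<epsilon> s0 + (\<integral>\<omega>. PI (X \<omega>) l0 * (- T s0 \<omega>) \<partial>M)) + h\<^sup>2 * (\<beta> * (C s0)\<^sup>2)"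
        by (rule pertF[OF l0 s0 um ub hb assms(15) nn sc pn]) (use h in auto)
      then show "0 \<le> h * (\<epsilon> s0 - Ipt PI l0 s0) + h\<^sup>2 * (\<beta> * (C s0)\<^sup>2)" unfolding Ipt_def by simp
    qed
    show ?thesis using A B by auto
  qed
  have feasPI: "fair_feasible M X S L K \<epsilon> PI"
    unfolding fair_feasible_def
  proof (intro conjI ballI gpPI)
    fix l s assume l: "l \<in> grid_idx L" and s: "s \<in> {1..K}"
    have "unfair M X S PI l s = \<bar>Ipt PI l s\<bar>" using Ipt_unfair[OF gpPI s] unfolding Ipt_def .
    then show "unfair M X S PI l s \<le> \<epsilon> s" using kkt[OF l[folded G_def] s] by auto
  qed
  define LHS where "LHS \<pi> \<omega> = (\<Sum>l\<in>G. \<pi> (X \<omega>) l * R l \<omega>) + (1/\<beta>) * negent L (\<pi> (X \<omega>))"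
    for \<pi> :: "real ^ 'd \<Rightarrow> int \<Rightarrow> real" and \<omega>
  define RHS where "RHS \<pi> \<omega> = - LSE \<beta> G (\<lambda>l. w l \<omega>) + (\<Sum>l\<in>G. \<Sum>s\<in>{1..K}. (\<Lambda>s l s - Vs l s) * (\<pi> (X \<omega>) l * T s \<omega>))"
    for \<pi> :: "real ^ 'd \<Rightarrow> int \<Rightarrow> real" and \<omega>
  have e: "(\<Sum>l\<in>G. \<pi> (X \<omega>) l * (- w l \<omega>)) = (\<Sum>l\<in>G. \<pi> (X \<omega>) l * R l \<omega>) - (\<Sum>l\<in>G. \<Sum>s\<in>{1..K}. (\<Lambda>s l s - Vs l s) * (\<pi> (X \<omega>) l * T s \<omega>))"
    for \<pi> :: "real ^ 'd \<Rightarrow> int \<Rightarrow> real" and \<omega>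
  proof -
    have "\<pi> (X \<omega>) l * (- w l \<omega>) = \<pi> (X \<omega>) l * R l \<omega> - (\<Sum>s\<in>{1..K}. (\<Lambda>s l s - Vs l s) * (\<pi> (X \<omega>) l * T s \<omega>))" for l
      unfolding w_def score_def T_def R_def by (simp add: sum_distrib_left algebra_simps)
    then show ?thesis by (simp add: sum_subtractf)
  qed
  have pt: "RHS \<pi> \<omega> \<le> LHS \<pi> \<omega>" if gp: "grid_prediction L \<pi>" for \<pi> \<omega>
  proof -
    have p0: "\<And>l. l \<in> G \<Longrightarrow> 0 \<le> \<pi> (X \<omega>) l" and p1: "(\<Sum>l\<in>G. \<pi> (X \<omega>) l) = 1"
      using gp unfolding grid_prediction_def G_def by auto
    have g: "- LSE \<beta> G (\<lambda>l. w l \<omega>) \<le> (\<Sum>l\<in>G. \<pi> (X \<omega>) l * (- w l \<omega>)) + (1/\<beta>) * (\<Sum>l\<in>G. if \<pi> (X \<omega>) l = 0 then 0 else \<pi> (X \<omega>) l * ln (\<pi> (X \<omega>) l))"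
      by (rule gibbs_ineq[OF Gfin b p0 p1])
    then show ?thesis unfolding LHS_def RHS_def negent_def G_def[symmetric] e by simp
  qed
  have pteq: "RHS PI \<omega> = LHS PI \<omega>" for \<omega>
  proof -
    have g: "- LSE \<beta> G (\<lambda>l. w l \<omega>) = (\<Sum>l\<in>G. PI (X \<omega>) l * (- w l \<omega>)) + (1/\<beta>) * (\<Sum>l\<in>G. if PI (X \<omega>) l = 0 then 0 else PI (X \<omega>) l * ln (PI (X \<omega>) l))"
    proof -
      define pp where "pp l = exp (\<beta> * w l \<omega>) / (\<Sum>l'\<in>G. exp (\<beta> * w l' \<omega>))" for l
      have pe: "\<And>l. l \<in> G \<Longrightarrow> PI (X \<omega>) l = pp l" unfolding pp_def by (rule PIeq)
      have "(\<Sum>l\<in>G. PI (X \<omega>) l * (- w l \<omega>)) + (1/\<beta>) * (\<Sum>l\<in>G. if PI (X \<omega>) l = 0 then 0 else PI (X \<omega>) l * ln (PI (X \<omega>) l))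
          = (\<Sum>l\<in>G. pp l * (- w l \<omega>)) + (1/\<beta>) * (\<Sum>l\<in>G. if pp l = 0 then 0 else pp l * ln (pp l))"
        using pe by (intro arg_cong2[where f="(+)"] arg_cong2[where f="(*)"] refl sum.cong) auto
      moreover have "- LSE \<beta> G (\<lambda>l. w l \<omega>) = (\<Sum>l\<in>G. pp l * (- w l \<omega>)) + (1/\<beta>) * (\<Sum>l\<in>G. if pp l = 0 then 0 else pp l * ln (pp l))"
        using gibbs_eq[OF Gfin Gne b, of "\<lambda>l. w l \<omega>"] unfolding pp_def .
      ultimately show ?thesis by simp
    qed
    then show ?thesis unfolding LHS_def RHS_def negent_def G_def[symmetric] e by simp
  qed
  have LSEi: "integrable M (\<lambda>\<omega>. LSE \<beta> G (\<lambda>l. w l \<omega>))" by (rule LSE_integrable[OF P Gfin Gne b wi])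
  have integ: "integrable M (LHS \<pi>) \<and> risk_beta M X \<eta> B L \<beta> \<pi> = (\<integral>\<omega>. LHS \<pi> \<omega> \<partial>M) \<and>
      integrable M (RHS \<pi>) \<and> (\<integral>\<omega>. RHS \<pi> \<omega> \<partial>M) = - (\<integral>\<omega>. LSE \<beta> G (\<lambda>l. w l \<omega>) \<partial>M) + (\<Sum>l\<in>G. \<Sum>s\<in>{1..K}. (\<Lambda>s l s - Vs l s) * Ipt \<pi> l s)"
    if gp: "grid_prediction L \<pi>" for \<pi>
  proof -
    have \<pi>m: "(\<lambda>x. \<pi> x l) \<in> borel_measurable borel" and \<pi>01: "0 \<le> \<pi> x l \<and> \<pi> x l \<le> 1" for x l
      using gp_facts[OF gp] by auto
    have \<pi>M[measurable]: "(\<lambda>\<omega>. \<pi> (X \<omega>) l) \<in> borel_measurable M" for l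
      using measurable_comp[OF Xm \<pi>m] by (simp add: comp_def)
    have \<pi>Ri: "integrable M (\<lambda>\<omega>. \<pi> (X \<omega>) l * R l \<omega>)" for l
    proof (rule Bochner_Integration.integrable_bound[OF Ri[of l]])
      show "(\<lambda>\<omega>. \<pi> (X \<omega>) l * R l \<omega>) \<in> borel_measurable M" using Rm[of l] by measurable
      show "AE \<omega> in M. norm (\<pi> (X \<omega>) l * R l \<omega>) \<le> norm (R l \<omega>)"
        using \<pi>01 R0 by (auto intro!: AE_I2 simp: abs_mult mult_left_le_one_le)
    qed
    have Ai: "integrable M (\<lambda>\<omega>. \<Sum>l\<in>G. \<pi> (X \<omega>) l * R l \<omega>)" using \<pi>Ri by auto
    have Ni: "integrable M (\<lambda>\<omega>. negent L (\<pi> (X \<omega>)))"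
    proof (rule bounded_integrable[OF P _ _, where C="real (card G)"])
      show "(\<lambda>\<omega>. negent L (\<pi> (X \<omega>))) \<in> borel_measurable M" unfolding negent_def by measurable
      show "AE \<omega> in M. \<bar>negent L (\<pi> (X \<omega>))\<bar> \<le> real (card G)"
      proof (intro AE_I2)
        fix \<omega>
        have "\<bar>negent L (\<pi> (X \<omega>))\<bar> \<le> (\<Sum>l\<in>G. \<bar>if \<pi> (X \<omega>) l = 0 then 0 else \<pi> (X \<omega>) l * ln (\<pi> (X \<omega>) l)\<bar>)"
          unfolding negent_def G_def[symmetric] by (rule sum_abs)
        also have "\<dots> \<le> (\<Sum>l\<in>G. 1)" using \<pi>01 by (intro sum_mono xlnx_bound) auto
        finally show "\<bar>negent L (\<pi> (X \<omega>))\<bar> \<le> real (card G)" by simp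
      qed
    qed
    have \<pi>Ti: "integrable M (\<lambda>\<omega>. \<pi> (X \<omega>) l * T s \<omega>)" if s: "s \<in> {1..K}" for l s
    proof (rule bounded_integrable[OF P _ _, where C="C s"])
      show "(\<lambda>\<omega>. \<pi> (X \<omega>) l * T s \<omega>) \<in> borel_measurable M" using Tm[OF s] by measurable
      show "AE \<omega> in M. \<bar>\<pi> (X \<omega>) l * T s \<omega>\<bar> \<le> C s"
        using Tb[OF s]
      proof eventually_elim
        case (elim \<omega>)
        have "\<bar>\<pi> (X \<omega>) l * T s \<omega>\<bar> \<le> 1 * \<bar>T s \<omega>\<bar>" unfolding abs_mult
          using \<pi>01 by (intro mult_right_mono) auto
        then show ?case using elim by simp
      qed
    qed
    have ci: "integrable M (\<lambda>\<omega>. (\<Lambda>s l s - Vs l s) * (\<pi> (X \<omega>) l * T s \<omega>))" if "s \<in> {1..K}" for l s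
      using \<pi>Ti[OF that] by simp
    have Si: "integrable M (\<lambda>\<omega>. \<Sum>l\<in>G. \<Sum>s\<in>{1..K}. (\<Lambda>s l s - Vs l s) * (\<pi> (X \<omega>) l * T s \<omega>))"
      using ci by (intro Bochner_Integration.integrable_sum) auto
    have LHSi: "integrable M (LHS \<pi>)" unfolding LHS_def using Ai Ni by auto
    have RHSi: "integrable M (RHS \<pi>)" unfolding RHS_def using LSEi Si by auto
    have rb: "risk_beta M X \<eta> B L \<beta> \<pi> = (\<integral>\<omega>. LHS \<pi> \<omega> \<partial>M)"
      unfolding LHS_def risk_beta_def risk_def R_def G_def using Ai Ni unfolding R_def G_def by simp
    have "(\<integral>\<omega>. (\<Sum>l\<in>G. \<Sum>s\<in>{1..K}. (\<Lambda>s l s - Vs l s) * (\<pi> (X \<omega>) l * T s \<omega>)) \<partial>M)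
        = (\<Sum>l\<in>G. (\<integral>\<omega>. (\<Sum>s\<in>{1..K}. (\<Lambda>s l s - Vs l s) * (\<pi> (X \<omega>) l * T s \<omega>)) \<partial>M))"
      by (rule Bochner_Integration.integral_sum) (use ci in auto)
    also have "\<dots> = (\<Sum>l\<in>G. \<Sum>s\<in>{1..K}. (\<integral>\<omega>. (\<Lambda>s l s - Vs l s) * (\<pi> (X \<omega>) l * T s \<omega>) \<partial>M))"
      by (intro sum.cong refl Bochner_Integration.integral_sum) (use ci in auto)
    also have "\<dots> = (\<Sum>l\<in>G. \<Sum>s\<in>{1..K}. (\<Lambda>s l s - Vs l s) * Ipt \<pi> l s)"
      unfolding Ipt_def by simp
    finally have "(\<integral>\<omega>. RHS \<pi> \<omega> \<partial>M) = - (\<integral>\<omega>. LSE \<beta> G (\<lambda>l. w l \<omega>) \<partial>M) + (\<Sum>l\<in>G. \<Sum>s\<in>{1..K}. (\<Lambda>s l s - Vs l s) * Ipt \<pi> l s)"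
      unfolding RHS_def using LSEi Si by simp
    then show ?thesis using LHSi RHSi rb by simp
  qed
  have sumPI: "(\<Sum>l\<in>G. \<Sum>s\<in>{1..K}. (\<Lambda>s l s - Vs l s) * Ipt PI l s) = - pen \<Lambda>s Vs"
  proof -
    have "(\<Lambda>s l s - Vs l s) * Ipt PI l s = - ((\<Lambda>s l s + Vs l s) * \<epsilon> s)" if "l \<in> G" "s \<in> {1..K}" for l s
    proof -
      have k1: "\<Lambda>s l s * (\<epsilon> s + Ipt PI l s) = 0" and k2: "Vs l s * (\<epsilon> s - Ipt PI l s) = 0"
        using kkt[OF that] by auto
      have a: "\<Lambda>s l s * Ipt PI l s = - (\<Lambda>s l s * \<epsilon> s)" using k1 by (simp add: distrib_left add_eq_0_iff)
      have b: "Vs l s * Ipt PI l s = Vs l s * \<epsilon> s" using k2 by (auto simp: right_diff_distrib)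
      show ?thesis using a b by (simp add: left_diff_distrib distrib_right)
    qed
    then show ?thesis unfolding pen_def by (simp add: sum_negf[symmetric])
  qed
  have sumF: "(\<Sum>l\<in>G. \<Sum>s\<in>{1..K}. (\<Lambda>s l s - Vs l s) * Ipt \<pi> l s) \<ge> - pen \<Lambda>s Vs"
    if f: "fair_feasible M X S L K \<epsilon> \<pi>" for \<pi>
  proof -
    have gp: "grid_prediction L \<pi>" using f unfolding fair_feasible_def by auto
    have "(\<Lambda>s l s - Vs l s) * Ipt \<pi> l s \<ge> - ((\<Lambda>s l s + Vs l s) * \<epsilon> s)" if l: "l \<in> G" and s: "s \<in> {1..K}" for l s
    proof -
      have "unfair M X S \<pi> l s \<le> \<epsilon> s" using f l s unfolding fair_feasible_def G_def by auto
      then have I: "\<bar>Ipt \<pi> l s\<bar> \<le> \<epsilon> s" using Ipt_unfair[OF gp s] unfolding Ipt_def by simp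
      have nn: "\<Lambda>s l s \<ge> 0" "Vs l s \<ge> 0" using assms(15,16) l s unfolding nonneg_mat_def G_def by auto
      have "\<Lambda>s l s * Ipt \<pi> l s \<ge> \<Lambda>s l s * (- \<epsilon> s)" using I nn by (intro mult_left_mono) auto
      moreover have "Vs l s * Ipt \<pi> l s \<le> Vs l s * \<epsilon> s" using I nn by (intro mult_left_mono) auto
      ultimately show ?thesis by (simp add: algebra_simps)
    qed
    then have "(\<Sum>l\<in>G. \<Sum>s\<in>{1..K}. - ((\<Lambda>s l s + Vs l s) * \<epsilon> s)) \<le> (\<Sum>l\<in>G. \<Sum>s\<in>{1..K}. (\<Lambda>s l s - Vs l s) * Ipt \<pi> l s)"
      by (intro sum_mono) auto
    then show ?thesis unfolding pen_def by (simp add: sum_negf)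
  qed
  have FF: "Fobj M X S \<tau> \<eta> B L K \<beta> \<epsilon> \<Lambda>s Vs = (\<integral>\<omega>. LSE \<beta> G (\<lambda>l. w l \<omega>) \<partial>M) + pen \<Lambda>s Vs"
    unfolding Feq w_def ..
  have rPI: "risk_beta M X \<eta> B L \<beta> PI = - Fobj M X S \<tau> \<eta> B L K \<beta> \<epsilon> \<Lambda>s Vs"
  proof -
    have "risk_beta M X \<eta> B L \<beta> PI = (\<integral>\<omega>. LHS PI \<omega> \<partial>M)" using integ[OF gpPI] by simp
    also have "\<dots> = (\<integral>\<omega>. RHS PI \<omega> \<partial>M)" using pteq by simp
    also have "\<dots> = - Fobj M X S \<tau> \<eta> B L K \<beta> \<epsilon> \<Lambda>s Vs" using integ[OF gpPI] sumPI FF by simp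
    finally show ?thesis .
  qed
  have opt: "risk_beta M X \<eta> B L \<beta> PI \<le> risk_beta M X \<eta> B L \<beta> \<pi>" if f: "fair_feasible M X S L K \<epsilon> \<pi>" for \<pi>
  proof -
    have gp: "grid_prediction L \<pi>" using f unfolding fair_feasible_def by auto
    have "- Fobj M X S \<tau> \<eta> B L K \<beta> \<epsilon> \<Lambda>s Vs \<le> (\<integral>\<omega>. RHS \<pi> \<omega> \<partial>M)"
      using integ[OF gp] sumF[OF f] FF by simp
    also have "\<dots> \<le> (\<integral>\<omega>. LHS \<pi> \<omega> \<partial>M)"
      using integ[OF gp] pt[OF gp] by (intro integral_mono) auto
    also have "\<dots> = risk_beta M X \<eta> B L \<beta> \<pi>" using integ[OF gp] by simp
    finally show ?thesis using rPI by simp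
  qed
  show ?thesis using feasPI opt unfolding PI_def by blast
qed

end
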